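(* Let $\phi$ be a posterior family for a model $\pi$ with data space $Y$ and parameter space $\Theta$, and let $g(\theta,y)=\frac{\pi_{\text{post}}(\theta\mid y)}{\phi(\theta\mid y)}$. Then $\phi$ passes continuous SBC with respect to $g$ if and only if $$\int_Y\int_\Theta \pi_{\text{joint}}(y,\theta)\,\mathbb{I}\big[\pi_{\text{post}}(\theta\mid y)\neq\phi(\theta\mid y)\big]\,\mathrm{d}\theta\,\mathrm{d}y=0.$$
   Context: Model $\pi$: prior density $\pi_{\text{prior}}(\theta)$ on $\Theta$, observation density $\pi_{\text{obs}}(y\mid\theta)$ on $Y$, $\pi_{\text{joint}}(y,\theta)=\pi_{\text{obs}}(y\mid\theta)\pi_{\text{prior}}(\theta)$, $\pi_{\text{marg}}(y)=\int_\Theta\pi_{\text{joint}}(y,\theta)\,\mathrm{d}\theta$, $\pi_{\text{post}}(\theta\mid y)=\pi_{\text{joint}}(y,\theta)/\pi_{\text{marg}}(y)$. A posterior family is $\phi:\Theta\times Y\to\mathbb{R}^+$ with $\int_\Theta\phi(\theta\mid y)\,\mathrm{d}\theta=1$ for all $y$; a test quantity is a measurable real function on $\Theta\times Y$. For a test quantity $f$: $C_{\phi,f}(s\mid y)=\int_\Theta\mathbb{I}[f(\theta,y)\le s]\phi(\theta\mid y)\,\mathrm{d}\theta$, $D_{\phi,f}(s\mid y)=\int_\Theta\mathbb{I}[f(\theta,y)=s]\phi(\theta\mid y)\,\mathrm{d}\theta$; with $U\sim\mathrm{uniform}[0,1]$, $r_{\phi,f}(x\mid\tilde\theta,y)=\Pr\big(C_{\phi,f}(f(\tilde\theta,y)\mid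 y)-U\,D_{\phi,f}(f(\tilde\theta,y)\mid y)\le x\big)$, $q_{\phi,f}(x\mid y)=\int_\Theta\pi_{\text{post}}(\tilde\theta\mid y)r_{\phi,f}(x\mid\tilde\theta,y)\,\mathrm{d}\tilde\theta$. $\phi$ passes continuous SBC w.r.t. $f$ if $\int_Yq_{\phi,f}(x\mid y)\pi_{\text{marg}}(y)\,\mathrm{d}y=x$ for all $x\in[0,1]$. *)

theory Defs
  imports "HOL-Analysis.Analysis"
begin

text \<open>Argument conventions: obs y th = pi_obs(y | th), phi th y = phi(th | y),
  post th y = pi_post(th | y), joint y th = pi_joint(y, th).\<close>

definition is_model :: "'t measure \<Rightarrow> 'y measure \<Rightarrow> ('t \<Rightarrow> real) \<Rightarrow> ('y \<Rightarrow> 't \<Rightarrow> real) \<Rightarrow> bool" where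
  "is_model MT MY prior obs \<longleftrightarrow>
     sigma_finite_measure MT \<and> sigma_finite_measure MY \<and>
     prior \<in> borel_measurable MT \<and>
     (\<lambda>(y, th). obs y th) \<in> borel_measurable (MY \<Otimes>\<^sub>M MT) \<and>
     (\<forall>th\<in>space MT. prior th \<ge> 0) \<and>
     (\<forall>y\<in>space MY. \<forall>th\<in>space MT. obs y th \<ge> 0) \<and>
     integrable MT prior \<and> (\<integral>th. prior th \<partial>MT) = 1 \<and>
     (\<forall>th\<in>space MT. integrable MY (\<lambda>y. obs y th) \<and> (\<integral>y. obs y th \<partial>MY) = 1)"

definition joint :: "('t \<Rightarrow> real) \<Rightarrow> ('y \<Rightarrow> 't \<Rightarrow> real) \<Rightarrow> 'y \<Rightarrow> 't \<Rightarrow> real" where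
  "joint prior obs y th = obs y th * prior th"

definition marg :: "'t measure \<Rightarrow> ('t \<Rightarrow> real) \<Rightarrow> ('y \<Rightarrow> 't \<Rightarrow> real) \<Rightarrow> 'y \<Rightarrow> real" where
  "marg MT prior obs y = (\<integral>th. joint prior obs y th \<partial>MT)"

definition post :: "'t measure \<Rightarrow> ('t \<Rightarrow> real) \<Rightarrow> ('y \<Rightarrow> 't \<Rightarrow> real) \<Rightarrow> 't \<Rightarrow> 'y \<Rightarrow> real" where
  "post MT prior obs th y = joint prior obs y th / marg MT prior obs y"

text \<open>Posterior family: phi : Theta x Y -> R^+ (read as strictly positive reals),
  measurable, normalised for every y.\<close>
definition posterior_family :: "'t measure \<Rightarrow> 'y measure \<Rightarrow> ('t \<Rightarrow> 'y \<Rightarrow> real) \<Rightarrow> bool" where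
  "posterior_family MT MY phi \<longleftrightarrow>
     (\<lambda>(th, y). phi th y) \<in> borel_measurable (MT \<Otimes>\<^sub>M MY) \<and>
     (\<forall>th\<in>space MT. \<forall>y\<in>space MY. phi th y > 0) \<and>
     (\<forall>y\<in>space MY. integrable MT (\<lambda>th. phi th y) \<and> (\<integral>th. phi th y \<partial>MT) = 1)"

definition sbc_C :: "'t measure \<Rightarrow> ('t \<Rightarrow> 'y \<Rightarrow> real) \<Rightarrow> ('t \<Rightarrow> 'y \<Rightarrow> real) \<Rightarrow> real \<Rightarrow> 'y \<Rightarrow> real" where
  "sbc_C MT phi f s y = (\<integral>th. (if f th y \<le> s then 1 else 0) * phi th y \<partial>MT)"

definition sbc_D :: "'t measure \<Rightarrow> ('t \<Rightarrow> 'y \<Rightarrow> real) \<Rightarrow> ('t \<Rightarrow> 'y \<Rightarrow> real) \<Rightarrow> real \<Rightarrow> 'y \<Rightarrow> real" where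
  "sbc_D MT phi f s y = (\<integral>th. (if f th y = s then 1 else 0) * phi th y \<partial>MT)"

definition sbc_r :: "'t measure \<Rightarrow> ('t \<Rightarrow> 'y \<Rightarrow> real) \<Rightarrow> ('t \<Rightarrow> 'y \<Rightarrow> real) \<Rightarrow> real \<Rightarrow> 't \<Rightarrow> 'y \<Rightarrow> real" where
  "sbc_r MT phi f x tht y =
     measure lborel {u \<in> {0..1::real}.
        sbc_C MT phi f (f tht y) y - u * sbc_D MT phi f (f tht y) y \<le> x}"

definition sbc_q :: "'t measure \<Rightarrow> ('t \<Rightarrow> real) \<Rightarrow> ('y \<Rightarrow> 't \<Rightarrow> real) \<Rightarrow> ('t \<Rightarrow> 'y \<Rightarrow> real) \<Rightarrow> ('t \<Rightarrow> 'y \<Rightarrow> real) \<Rightarrow> real \<Rightarrow> 'y \<Rightarrow> real" where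
  "sbc_q MT prior obs phi f x y = (\<integral>tht. post MT prior obs tht y * sbc_r MT phi f x tht y \<partial>MT)"

definition passes_continuous_SBC :: "'t measure \<Rightarrow> 'y measure \<Rightarrow> ('t \<Rightarrow> real) \<Rightarrow> ('y \<Rightarrow> 't \<Rightarrow> real) \<Rightarrow> ('t \<Rightarrow> 'y \<Rightarrow> real) \<Rightarrow> ('t \<Rightarrow> 'y \<Rightarrow> real) \<Rightarrow> bool" where
  "passes_continuous_SBC MT MY prior obs phi f \<longleftrightarrow>
     (\<forall>x\<in>{0..1::real}. (\<integral>y. sbc_q MT prior obs phi f x y * marg MT prior obs y \<partial>MY) = x)"

end

theory Submission
  imports Defs
begin

lemma int_ind:
  fixes \<phi> :: "'t \<Rightarrow> real"
  assumes "integrable M \<phi>" "Measurable.pred M P"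
  shows "integrable M (\<lambda>t. (if P t then 1 else 0) * \<phi> t)"
proof -
  have "{t\<in>space M. P t} \<in> sets M" using assms(2) by measurable
  then have "integrable M (\<lambda>t. indicator {t\<in>space M. P t} t *\<^sub>R \<phi> t)"
    by (rule integrable_mult_indicator[OF _ assms(1)])
  moreover have "integrable M (\<lambda>t. indicator {t\<in>space M. P t} t *\<^sub>R \<phi> t) \<longleftrightarrow>
     integrable M (\<lambda>t. (if P t then 1 else 0) * \<phi> t)"
    by (rule Bochner_Integration.integrable_cong) (auto simp: indicator_def)
  ultimately show ?thesis by simp
qed

lemma lim_ind:
  fixes \<phi> :: "'t \<Rightarrow> real"
  assumes "integrable M \<phi>" "\<And>t. t\<in>space M \<Longrightarrow> \<phi> t \<ge> 0"
    "\<And>i. Measurable.pred M (P i)" "Measurable.pred M Q"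
    "\<And>t. t \<in> space M \<Longrightarrow> eventually (\<lambda>i. P i t = Q t) sequentially"
  shows "(\<lambda>i. \<integral>t. (if P i t then 1 else 0) * \<phi> t \<partial>M) \<longlonglongrightarrow> (\<integral>t. (if Q t then 1 else 0) * \<phi> t \<partial>M)"
proof (rule integral_dominated_convergence[where w=\<phi>])
  show "(\<lambda>t. (if Q t then 1 else 0) * \<phi> t) \<in> borel_measurable M"
    using assms(1,4) by measurable
  show "(\<lambda>t. (if P i t then 1 else 0) * \<phi> t) \<in> borel_measurable M" for i
    using assms(1,3) by measurable
  show "integrable M \<phi>" by fact
  show "AE t in M. (\<lambda>i. (if P i t then 1 else 0) * \<phi> t) \<longlonglongrightarrow> (if Q t then 1 else 0) * \<phi> t"
  proof (rule AE_I2)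
    fix t assume t: "t \<in> space M"
    show "(\<lambda>i. (if P i t then 1 else 0) * \<phi> t) \<longlonglongrightarrow> (if Q t then 1 else 0) * \<phi> t"
      by (rule tendsto_eventually) (use assms(5)[OF t] in \<open>auto elim: eventually_mono\<close>)
  qed
  show "AE t in M. norm ((if P i t then 1 else 0) * \<phi> t) \<le> \<phi> t" for i
    using assms(2) by (auto intro!: AE_I2)
qed

lemma per_y:
  fixes M :: "'t measure" and p \<phi> :: "'t \<Rightarrow> real" and x :: real
  assumes pm[measurable]: "p \<in> borel_measurable M" and \<phi>m[measurable]: "\<phi> \<in> borel_measurable M"
   and pint: "integrable M p" and \<phi>int: "integrable M \<phi>"
   and p0: "\<And>t. t \<in> space M \<Longrightarrow> p t \<ge> 0" and \<phi>0: "\<And>t. t\<in>space M \<Longrightarrow> \<phi> t > 0"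
   and p1: "(\<integral>t. p t \<partial>M) = 1" and \<phi>1: "(\<integral>t. \<phi> t \<partial>M) = 1"
   and x0: "0 \<le> x" and x1: "x < 1"
  shows "\<exists>H. H \<in> borel_measurable M \<and>
    (\<forall>t\<in>space M. measure lborel {u \<in> {0..1::real}.
        (\<integral>s. (if p s / \<phi> s \<le> p t / \<phi> t then 1 else 0) * \<phi> s \<partial>M)
        - u * (\<integral>s. (if p s / \<phi> s = p t / \<phi> t then 1 else 0) * \<phi> s \<partial>M) \<le> x} = H t) \<and>
    (\<forall>t. 0 \<le> H t \<and> H t \<le> 1) \<and> (\<integral>t. p t * H t \<partial>M) \<le> x \<and> (\<integral>t. \<phi> t * H t \<partial>M) = x \<and>
    (0 < x \<longrightarrow> (\<integral>t. p t * H t \<partial>M) = x \<longrightarrow> (AE t in M. p t = \<phi> t))"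
proof -
  define g where "g t = p t / \<phi> t" for t
  define C where "C s = (\<integral>t. (if g t \<le> s then 1 else 0) * \<phi> t \<partial>M)" for s
  define D where "D s = (\<integral>t. (if g t = s then 1 else 0) * \<phi> t \<partial>M)" for s
  define L where "L s = (\<integral>t. (if g t < s then 1 else 0) * \<phi> t \<partial>M)" for s
  have gm[measurable]: "g \<in> borel_measurable M" unfolding g_def by measurable
  have intI: "integrable M (\<lambda>t. (if P t then 1 else 0) * \<phi> t)" if "Measurable.pred M P" for P
    using int_ind[OF \<phi>int that] .
  have intIp: "integrable M (\<lambda>t. (if P t then 1 else 0) * p t)" if "Measurable.pred M P" for P
    using int_ind[OF pint that] .
  have g0: "g t \<ge> 0" if "t \<in> space M" for t
    using p0[OF that] \<phi>0[OF that] unfolding g_def by simp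
  have pg: "p t = g t * \<phi> t" if "t \<in> space M" for t
    using \<phi>0[OF that] unfolding g_def by simp
  have \<phi>ge: "0 \<le> \<phi> t" if "t \<in> space M" for t using \<phi>0[OF that] by simp
  have Cmono: "C s \<le> C s'" if "s \<le> s'" for s s'
    unfolding C_def using that \<phi>0
    by (intro Bochner_Integration.integral_mono intI) (auto intro: less_imp_le)
  have CLD: "C s = L s + D s" for s
  proof -
    have "C s = (\<integral>t. (if g t < s then 1 else 0) * \<phi> t + (if g t = s then 1 else 0) * \<phi> t \<partial>M)"
      unfolding C_def by (rule Bochner_Integration.integral_cong) auto
    also have "\<dots> = L s + D s" unfolding L_def D_def
      by (rule Bochner_Integration.integral_add) (auto intro!: intI)
    finally show ?thesis .
  qed
  have D0: "D s \<ge> 0" for s unfolding D_def using \<phi>0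
    by (intro Bochner_Integration.integral_nonneg) (auto intro: less_imp_le)
  have L0: "L s \<ge> 0" for s unfolding L_def using \<phi>0
    by (intro Bochner_Integration.integral_nonneg) (auto intro: less_imp_le)
  have Cneg: "C s = 0" if "s < 0" for s
  proof -
    have nl: "\<not> g t \<le> s" if "t \<in> space M" for t using g0[OF that] \<open>s < 0\<close> by linarith
    have "C s = (\<integral>t. 0 \<partial>M)" unfolding C_def
      by (rule Bochner_Integration.integral_cong) (auto dest: nl)
    then show ?thesis by simp
  qed
  have Ctop: "(\<lambda>n. C (real n)) \<longlonglongrightarrow> 1"
  proof -
    have "(\<lambda>n. C (real n)) \<longlonglongrightarrow> (\<integral>t. (if True then 1 else 0) * \<phi> t \<partial>M)"
      unfolding C_def
    proof (rule lim_ind[OF \<phi>int])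
      fix t assume "t \<in> space M"
      obtain N where "g t \<le> real N" using real_arch_simple by blast
      then show "\<forall>\<^sub>F i in sequentially. (g t \<le> real i) = True"
        by (intro eventually_sequentiallyI[of N]) auto
    next
      show "Measurable.pred M (\<lambda>t. g t \<le> real i)" for i by measurable
    next
      show "Measurable.pred M (\<lambda>t. True)" by simp
    qed (rule \<phi>ge)
    then show ?thesis using \<phi>1 by simp
  qed
  have Cright: "(\<lambda>n. C (s + 1 / Suc n)) \<longlonglongrightarrow> C s" for s
    unfolding C_def
  proof (rule lim_ind[OF \<phi>int])
    fix t assume "t \<in> space M"
    show "\<forall>\<^sub>F i in sequentially. (g t \<le> s + 1 / Suc i) = (g t \<le> s)"
    proof (cases "g t \<le> s")
      case True
      have "\<forall>i. (g t \<le> s + 1 / Suc i) = (g t \<le> s)"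
      proof
        fix i :: nat
        have "0 \<le> 1 / real (Suc i)" by simp
        then show "(g t \<le> s + 1 / Suc i) = (g t \<le> s)" using True by linarith
      qed
      then show ?thesis by (intro always_eventually)
    next
      case False
      then obtain N where N: "inverse (real (Suc N)) < g t - s"
        using reals_Archimedean[of "g t - s"] by auto
      show ?thesis
      proof (intro eventually_sequentiallyI[of N])
        fix n assume "N \<le> n"
        then have "1 / real (Suc n) \<le> 1 / real (Suc N)"
          by (intro divide_left_mono) auto
        moreover have "inverse (real (Suc N)) = 1 / real (Suc N)" by (simp add: inverse_eq_divide)
        ultimately show "(g t \<le> s + 1 / Suc n) = (g t \<le> s)" using N False by linarith
      qed
    qed
  next
    show "Measurable.pred M (\<lambda>t. g t \<le> s + 1 / Suc i)" for i by measurable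
  next
    show "Measurable.pred M (\<lambda>t. g t \<le> s)" by measurable
  qed (rule \<phi>ge)
  have Cleft: "(\<lambda>n. C (s - 1 / Suc n)) \<longlonglongrightarrow> L s" for s
    unfolding C_def L_def
  proof (rule lim_ind[OF \<phi>int])
    fix t assume "t \<in> space M"
    show "\<forall>\<^sub>F i in sequentially. (g t \<le> s - 1 / Suc i) = (g t < s)"
    proof (cases "g t < s")
      case False
      have "\<forall>i. (g t \<le> s - 1 / Suc i) = (g t < s)"
      proof
        fix i :: nat
        have "0 < 1 / real (Suc i)" by simp
        then show "(g t \<le> s - 1 / Suc i) = (g t < s)" using False by linarith
      qed
      then show ?thesis by (intro always_eventually)
    next
      case True
      then obtain N where N: "inverse (real (Suc N)) < s - g t"
        using reals_Archimedean[of "s - g t"] by auto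
      show ?thesis
      proof (intro eventually_sequentiallyI[of N])
        fix n assume "N \<le> n"
        then have "1 / real (Suc n) \<le> 1 / real (Suc N)"
          by (intro divide_left_mono) auto
        moreover have "inverse (real (Suc N)) = 1 / real (Suc N)" by (simp add: inverse_eq_divide)
        ultimately show "(g t \<le> s - 1 / Suc n) = (g t < s)" using N True by linarith
      qed
    qed
  next
    show "Measurable.pred M (\<lambda>t. g t \<le> s - 1 / Suc i)" for i by measurable
  next
    show "Measurable.pred M (\<lambda>t. g t < s)" by measurable
  qed (rule \<phi>ge)
  define T where "T = Inf {s. x < C s}"
  have ne: "{s. x < C s} \<noteq> {}"
  proof -
    have "eventually (\<lambda>n. x < C (real n)) sequentially"
      using order_tendstoD(1)[OF Ctop x1] .
    then obtain n where "x < C (real n)" using eventually_sequentially by auto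
    then show ?thesis by auto
  qed
  have bdd: "bdd_below {s. x < C s}"
  proof (rule bdd_belowI[of _ 0])
    fix s assume "s \<in> {s. x < C s}"
    then show "0 \<le> s" using Cneg x0 by (cases "s < 0") auto
  qed
  have below: "C s \<le> x" if "s < T" for s
  proof (rule ccontr)
    assume "\<not> C s \<le> x"
    then have "T \<le> s" unfolding T_def by (intro cInf_lower[OF _ bdd]) auto
    then show False using that by simp
  qed
  have above: "x < L s" if Ts: "T < s" for s
  proof -
    obtain s' where s': "x < C s'" "s' < s"
      using Ts cInf_less_iff[OF ne bdd, of s] unfolding T_def by auto
    have "C s' \<le> L s" unfolding C_def L_def using s'(2) \<phi>0
      by (intro Bochner_Integration.integral_mono intI) (auto intro: less_imp_le)
    then show ?thesis using s' by simp
  qed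
  have CT: "x \<le> C T"
  proof (rule ccontr)
    assume "\<not> x \<le> C T"
    then have "eventually (\<lambda>n. C (T + 1 / Suc n) < x) sequentially"
      using order_tendstoD(2)[OF Cright[of T]] by simp
    then obtain n where n: "C (T + 1 / Suc n) < x" using eventually_sequentially by auto
    have "x < L (T + 1 / Suc n)" by (rule above) simp
    also have "\<dots> \<le> C (T + 1 / Suc n)" using CLD[of "T + 1 / Suc n"] D0[of "T + 1 / Suc n"] by linarith
    finally show False using n by simp
  qed
  have LT: "L T \<le> x"
    by (rule LIMSEQ_le_const2[OF Cleft[of T]]) (auto intro!: below)
  define c where "c = measure lborel {u \<in> {0..1::real}. C T - u * D T \<le> x}"
  have cprop: "0 \<le> c \<and> c \<le> 1 \<and> D T * c = x - L T"
  proof (cases "D T = 0")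
    case True
    have CTx: "C T = x" using CLD[of T] CT LT True by linarith
    have "{u \<in> {0..1::real}. C T - u * D T \<le> x} = {0..1}" using True CTx by auto
    then have "c = 1" unfolding c_def by simp
    then show ?thesis using True CTx CLD[of T] by simp
  next
    case False
    then have Dp: "D T > 0" using D0[of T] by simp
    define a where "a = (C T - x) / D T"
    have Da: "D T * a = C T - x" unfolding a_def using Dp by simp
    have a0: "0 \<le> a" unfolding a_def using CT Dp by simp
    have a1: "a \<le> 1" unfolding a_def using LT Dp CLD[of T] by (simp add: pos_divide_le_eq)
    have iff: "C T - u * D T \<le> x \<longleftrightarrow> a \<le> u" for u
    proof -
      have "a \<le> u \<longleftrightarrow> C T - x \<le> u * D T" unfolding a_def using Dp by (simp add: pos_divide_le_eq)
      then show ?thesis by linarith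
    qed
    have "{u \<in> {0..1::real}. C T - u * D T \<le> x} = {a..1}"
      using a0 by (auto simp: iff)
    then have "c = 1 - a" unfolding c_def using a1 by simp
    moreover have "D T * c = D T - D T * a" unfolding \<open>c = 1 - a\<close> by (simp add: right_diff_distrib)
    ultimately show ?thesis using a0 a1 Da CLD[of T] by linarith
  qed
  define H where "H t = (if g t < T then 1 else 0) + c * (if g t = T then 1 else 0)" for t
  have Hm[measurable]: "H \<in> borel_measurable M" unfolding H_def by measurable
  have H01: "0 \<le> H t \<and> H t \<le> 1" for t unfolding H_def using cprop by auto
  have rH: "measure lborel {u \<in> {0..1::real}. C (g t) - u * D (g t) \<le> x} = H t" if t: "t \<in> space M" for t
  proof -
    consider "g t < T" | "g t = T" | "g t > T" by linarith
    then show ?thesis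
    proof cases
      case 1
      have "C (g t) \<le> x" using below[OF 1] .
      then have "{u \<in> {0..1::real}. C (g t) - u * D (g t) \<le> x} = {0..1}"
        using D0[of "g t"] by (auto intro: order_trans[OF _ \<open>C (g t) \<le> x\<close>])
      then show ?thesis using 1 unfolding H_def by simp
    next
      case 2
      then show ?thesis unfolding H_def c_def by simp
    next
      case 3
      have "x < L (g t)" using above[OF 3] .
      have E: "{u \<in> {0..1::real}. C (g t) - u * D (g t) \<le> x} = {}"
      proof -
        have "x < C (g t) - u * D (g t)" if "u \<le> 1" for u
        proof -
          have "u * D (g t) \<le> 1 * D (g t)" using that D0[of "g t"] by (intro mult_right_mono) auto
          then show ?thesis using \<open>x < L (g t)\<close> CLD[of "g t"] by simp
        qed
        then show ?thesis by force
      qed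
      show ?thesis using 3 unfolding H_def E by simp
    qed
  qed
  have \<phi>H: "(\<integral>t. \<phi> t * H t \<partial>M) = x"
  proof -
    have "(\<integral>t. \<phi> t * H t \<partial>M) = (\<integral>t. (if g t < T then 1 else 0) * \<phi> t + c * ((if g t = T then 1 else 0) * \<phi> t) \<partial>M)"
      unfolding H_def by (rule Bochner_Integration.integral_cong) (auto simp: algebra_simps)
    also have "\<dots> = L T + c * D T" unfolding L_def D_def
      by (subst Bochner_Integration.integral_add) (auto intro!: intI)
    finally show ?thesis using cprop by (simp add: mult.commute)
  qed
  have intpH: "integrable M (\<lambda>t. p t * H t)"
  proof -
    have i1: "integrable M (\<lambda>t. (if g t < T then 1 else 0) * p t)" by (rule intIp) measurable
    have i2: "integrable M (\<lambda>t. (if g t = T then 1 else 0) * p t)" by (rule intIp) measurable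
    have "integrable M (\<lambda>t. (if g t < T then 1 else 0) * p t + c * ((if g t = T then 1 else 0) * p t))"
      using i1 i2 by simp
    moreover have "integrable M (\<lambda>t. (if g t < T then 1 else 0) * p t + c * ((if g t = T then 1 else 0) * p t))
       \<longleftrightarrow> integrable M (\<lambda>t. p t * H t)"
      unfolding H_def by (rule Bochner_Integration.integrable_cong) (auto simp: algebra_simps)
    ultimately show ?thesis by simp
  qed
  have int\<phi>H: "integrable M (\<lambda>t. \<phi> t * H t)"
  proof -
    have i1: "integrable M (\<lambda>t. (if g t < T then 1 else 0) * \<phi> t)" by (rule intI) measurable
    have i2: "integrable M (\<lambda>t. (if g t = T then 1 else 0) * \<phi> t)" by (rule intI) measurable
    have "integrable M (\<lambda>t. (if g t < T then 1 else 0) * \<phi> t + c * ((if g t = T then 1 else 0) * \<phi> t))"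
      using i1 i2 by simp
    moreover have "integrable M (\<lambda>t. (if g t < T then 1 else 0) * \<phi> t + c * ((if g t = T then 1 else 0) * \<phi> t))
       \<longleftrightarrow> integrable M (\<lambda>t. \<phi> t * H t)"
      unfolding H_def by (rule Bochner_Integration.integrable_cong) (auto simp: algebra_simps)
    ultimately show ?thesis by simp
  qed
  define k where "k t = (p t - T * \<phi> t) * (H t - x)" for t
  have key: "(\<integral>t. p t * H t \<partial>M) - x = (\<integral>t. k t \<partial>M)"
  proof -
    have "(\<integral>t. k t \<partial>M) = (\<integral>t. p t * H t - x * p t - T * (\<phi> t * H t) + (T * x) * \<phi> t \<partial>M)"
      unfolding k_def by (rule Bochner_Integration.integral_cong) (auto simp: algebra_simps)
    also have "\<dots> = (\<integral>t. p t * H t \<partial>M) - x * (\<integral>t. p t \<partial>M) - T * (\<integral>t. \<phi> t * H t \<partial>M) + (T * x) * (\<integral>t. \<phi> t \<partial>M)"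
      using intpH int\<phi>H pint \<phi>int by simp
    finally show ?thesis using p1 \<phi>1 \<phi>H by simp
  qed
  have kpos: "k t \<le> 0" if t: "t \<in> space M" for t
  proof -
    have e: "p t - T * \<phi> t = (g t - T) * \<phi> t" using pg[OF t] by (simp add: algebra_simps)
    consider "g t < T" | "g t = T" | "g t > T" by linarith
    then show ?thesis
    proof cases
      case 1
      then have "(g t - T) * \<phi> t \<le> 0" using \<phi>0[OF t] by (simp add: mult_nonpos_nonneg)
      moreover have "H t - x \<ge> 0" using 1 x1 unfolding H_def by simp
      ultimately show ?thesis unfolding k_def e by (simp add: mult_nonpos_nonneg)
    next
      case 2 then show ?thesis unfolding k_def e by simp
    next
      case 3
      then have "(g t - T) * \<phi> t \<ge> 0" using \<phi>0[OF t] by simp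
      moreover have "H t - x \<le> 0" using 3 x0 unfolding H_def by simp
      ultimately show ?thesis unfolding k_def e by (simp add: mult_nonneg_nonpos)
    qed
  qed
  have intk: "integrable M k" unfolding k_def
    using intpH int\<phi>H pint \<phi>int by (simp add: algebra_simps)
  have kint0: "(\<integral>t. k t \<partial>M) \<le> 0"
  proof -
    have "0 \<le> (\<integral>t. - k t \<partial>M)" by (rule Bochner_Integration.integral_nonneg) (use kpos in force)
    then show ?thesis by simp
  qed
  have strict: "AE t in M. p t = \<phi> t" if xp: "0 < x" and eq: "(\<integral>t. p t * H t \<partial>M) = x"
  proof -
    have "(\<integral>t. - k t \<partial>M) = 0" using key eq by simp
    then have "AE t in M. - k t = 0"
      using integral_nonneg_eq_0_iff_AE[of M "\<lambda>t. - k t"] intk kpos by (auto intro!: AE_I2)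
    then have AEg: "AE t in M. p t = T * \<phi> t"
    proof (rule AE_mp[OF _ AE_I2], intro impI)
      fix t assume t: "t \<in> space M" and k0: "- k t = 0"
      have e: "p t - T * \<phi> t = (g t - T) * \<phi> t" using pg[OF t] by (simp add: algebra_simps)
      have k0': "(g t - T) * \<phi> t = 0 \<or> H t - x = 0"
        using k0 unfolding k_def e by (metis mult_eq_0_iff neg_equal_0_iff_equal)
      have "g t = T"
      proof (rule ccontr)
        assume "g t \<noteq> T"
        then consider "g t < T" | "g t > T" by linarith
        then show False
        proof cases
          case 1
          then have "H t - x > 0" using x1 unfolding H_def by simp
          moreover have "(g t - T) * \<phi> t < 0" using 1 \<phi>0[OF t] by (simp add: mult_neg_pos)
          ultimately show False using k0' by linarith
        next
          case 2
          then have "H t - x < 0" using xp unfolding H_def by simp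
          moreover have "(g t - T) * \<phi> t > 0" using 2 \<phi>0[OF t] by simp
          ultimately show False using k0' by linarith
        qed
      qed
      then show "p t = T * \<phi> t" using pg[OF t] by simp
    qed
    have "1 = (\<integral>t. T * \<phi> t \<partial>M)" using p1 integral_cong_AE[OF _ _ AEg] by simp
    then have "T = 1" using \<phi>1 by simp
    then show ?thesis using AEg by simp
  qed
  show ?thesis
  proof (intro exI[of _ H] conjI ballI allI impI)
    fix t assume "t \<in> space M"
    then show "measure lborel {u \<in> {0..1::real}.
        (\<integral>s. (if p s / \<phi> s \<le> p t / \<phi> t then 1 else 0) * \<phi> s \<partial>M)
        - u * (\<integral>s. (if p s / \<phi> s = p t / \<phi> t then 1 else 0) * \<phi> s \<partial>M) \<le> x} = H t"
      using rH unfolding C_def D_def g_def by simp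
  qed (use H01 key kint0 \<phi>H strict in auto)
qed


lemma meas_all:
  fixes MT :: "'t measure" and MY :: "'y measure"
    and prior :: "'t \<Rightarrow> real" and obs :: "'y \<Rightarrow> 't \<Rightarrow> real"
    and phi :: "'t \<Rightarrow> 'y \<Rightarrow> real"
  assumes "is_model MT MY prior obs"
    and "posterior_family MT MY phi"
  shows "(\<lambda>y. sbc_q MT prior obs phi (\<lambda>th y. post MT prior obs th y / phi th y) x y * marg MT prior obs y) \<in> borel_measurable MY"
proof -
  interpret MT: sigma_finite_measure MT using assms(1) unfolding is_model_def by simp
  have priorm[measurable]: "prior \<in> borel_measurable MT" using assms(1) unfolding is_model_def by simp
  have obsm[measurable]: "case_prod obs \<in> borel_measurable (MY \<Otimes>\<^sub>M MT)" using assms(1) unfolding is_model_def by simp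
  have phim[measurable]: "case_prod phi \<in> borel_measurable (MT \<Otimes>\<^sub>M MY)" using assms(2) unfolding posterior_family_def by simp
  have margm[measurable]: "marg MT prior obs \<in> borel_measurable MY"
    unfolding marg_def joint_def by measurable
  have postm[measurable]: "case_prod (post MT prior obs) \<in> borel_measurable (MT \<Otimes>\<^sub>M MY)"
    unfolding post_def joint_def by measurable
  have Cm[measurable]: "case_prod (sbc_C MT phi (\<lambda>th y. post MT prior obs th y / phi th y)) \<in> borel_measurable (borel \<Otimes>\<^sub>M MY)"
    unfolding sbc_C_def by measurable
  have Dm[measurable]: "case_prod (sbc_D MT phi (\<lambda>th y. post MT prior obs th y / phi th y)) \<in> borel_measurable (borel \<Otimes>\<^sub>M MY)"
    unfolding sbc_D_def by measurable
  have rm[measurable]: "(\<lambda>(th, y). sbc_r MT phi (\<lambda>th y. post MT prior obs th y / phi th y) x th y) \<in> borel_measurable (MT \<Otimes>\<^sub>M MY)"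
    unfolding sbc_r_def by measurable
  show ?thesis
    unfolding sbc_q_def by measurable
qed


lemma y_level:
  fixes MT :: "'t measure" and MY :: "'y measure"
    and prior :: "'t \<Rightarrow> real" and obs :: "'y \<Rightarrow> 't \<Rightarrow> real"
    and phi :: "'t \<Rightarrow> 'y \<Rightarrow> real"
  assumes model: "is_model MT MY prior obs"
    and pf: "posterior_family MT MY phi"
    and y: "y \<in> space MY" and int: "integrable MT (\<lambda>th. joint prior obs y th)"
    and mpos: "0 < marg MT prior obs y" and x0: "0 \<le> x" and x1: "x \<le> 1"
  shows "0 \<le> sbc_q MT prior obs phi (\<lambda>th y. post MT prior obs th y / phi th y) x y"
    "sbc_q MT prior obs phi (\<lambda>th y. post MT prior obs th y / phi th y) x y \<le> x"
    "(AE th in MT. post MT prior obs th y = phi th y) \<Longrightarrow>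
       sbc_q MT prior obs phi (\<lambda>th y. post MT prior obs th y / phi th y) x y = x"
    "0 < x \<Longrightarrow> x < 1 \<Longrightarrow> sbc_q MT prior obs phi (\<lambda>th y. post MT prior obs th y / phi th y) x y = x \<Longrightarrow>
       (AE th in MT. post MT prior obs th y = phi th y)"
proof -
  interpret MT: sigma_finite_measure MT using model unfolding is_model_def by simp
  have priorm[measurable]: "prior \<in> borel_measurable MT" using model unfolding is_model_def by simp
  have obsm[measurable]: "case_prod obs \<in> borel_measurable (MY \<Otimes>\<^sub>M MT)" using model unfolding is_model_def by simp
  have phim[measurable]: "case_prod phi \<in> borel_measurable (MT \<Otimes>\<^sub>M MY)" using pf unfolding posterior_family_def by simp
  have margm[measurable]: "marg MT prior obs \<in> borel_measurable MY"
    unfolding marg_def joint_def by measurable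
  have postm[measurable]: "case_prod (post MT prior obs) \<in> borel_measurable (MT \<Otimes>\<^sub>M MY)"
    unfolding post_def joint_def by measurable
  define p where "p th = post MT prior obs th y" for th
  define \<phi> where "\<phi> th = phi th y" for th
  have pm[measurable]: "p \<in> borel_measurable MT" unfolding p_def using y by measurable
  have \<phi>m[measurable]: "\<phi> \<in> borel_measurable MT" unfolding \<phi>_def using y by measurable
  have pint: "integrable MT p" unfolding p_def post_def using int by simp
  have p1: "(\<integral>t. p t \<partial>MT) = 1" unfolding p_def post_def using mpos
    by (simp add: marg_def)
  have p0: "p t \<ge> 0" if "t \<in> space MT" for t
    unfolding p_def post_def joint_def using mpos model that y unfolding is_model_def by simp
  have \<phi>int: "integrable MT \<phi>" and \<phi>1: "(\<integral>t. \<phi> t \<partial>MT) = 1"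
    using pf y unfolding posterior_family_def \<phi>_def by auto
  have \<phi>0: "\<phi> t > 0" if "t \<in> space MT" for t
    using pf y that unfolding posterior_family_def \<phi>_def by auto
  have q_eq: "sbc_q MT prior obs phi (\<lambda>th y. post MT prior obs th y / phi th y) x y = (\<integral>t. p t * H t \<partial>MT)"
    if H: "\<forall>t\<in>space MT. measure lborel {u \<in> {0..1::real}.
        (\<integral>s. (if p s / \<phi> s \<le> p t / \<phi> t then 1 else 0) * \<phi> s \<partial>MT)
        - u * (\<integral>s. (if p s / \<phi> s = p t / \<phi> t then 1 else 0) * \<phi> s \<partial>MT) \<le> x} = H t" for H
    unfolding sbc_q_def
  proof (rule Bochner_Integration.integral_cong[OF refl])
    fix t assume "t \<in> space MT"
    then show "post MT prior obs t y * sbc_r MT phi (\<lambda>th y. post MT prior obs th y / phi th y) x t y = p t * H t"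
      using H unfolding sbc_r_def sbc_C_def sbc_D_def p_def \<phi>_def by simp
  qed
  show "0 \<le> sbc_q MT prior obs phi (\<lambda>th y. post MT prior obs th y / phi th y) x y"
    "sbc_q MT prior obs phi (\<lambda>th y. post MT prior obs th y / phi th y) x y \<le> x"
    "(AE th in MT. post MT prior obs th y = phi th y) \<Longrightarrow>
       sbc_q MT prior obs phi (\<lambda>th y. post MT prior obs th y / phi th y) x y = x"
    "0 < x \<Longrightarrow> x < 1 \<Longrightarrow> sbc_q MT prior obs phi (\<lambda>th y. post MT prior obs th y / phi th y) x y = x \<Longrightarrow>
       (AE th in MT. post MT prior obs th y = phi th y)"
  proof -
    show "0 < x \<Longrightarrow> x < 1 \<Longrightarrow> sbc_q MT prior obs phi (\<lambda>th y. post MT prior obs th y / phi th y) x y = x \<Longrightarrow>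
       (AE th in MT. post MT prior obs th y = phi th y)"
    proof -
      assume "0 < x" "x < 1" and qx: "sbc_q MT prior obs phi (\<lambda>th y. post MT prior obs th y / phi th y) x y = x"
      obtain H where H: "H \<in> borel_measurable MT" "\<forall>t\<in>space MT. measure lborel {u \<in> {0..1::real}.
        (\<integral>s. (if p s / \<phi> s \<le> p t / \<phi> t then 1 else 0) * \<phi> s \<partial>MT)
        - u * (\<integral>s. (if p s / \<phi> s = p t / \<phi> t then 1 else 0) * \<phi> s \<partial>MT) \<le> x} = H t"
        "(0 < x \<longrightarrow> (\<integral>t. p t * H t \<partial>MT) = x \<longrightarrow> (AE t in MT. p t = \<phi> t))"
        using per_y[OF pm \<phi>m pint \<phi>int p0 \<phi>0 p1 \<phi>1 x0 \<open>x < 1\<close>] by blast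
      then show ?thesis using q_eq[OF H(2)] qx \<open>0 < x\<close> unfolding p_def \<phi>_def by simp
    qed
  next
    have "0 \<le> sbc_q MT prior obs phi (\<lambda>th y. post MT prior obs th y / phi th y) x y \<and>
      sbc_q MT prior obs phi (\<lambda>th y. post MT prior obs th y / phi th y) x y \<le> x \<and>
      ((AE th in MT. post MT prior obs th y = phi th y) \<longrightarrow>
       sbc_q MT prior obs phi (\<lambda>th y. post MT prior obs th y / phi th y) x y = x)"
    proof (cases "x < 1")
      case True
      obtain H where H: "H \<in> borel_measurable MT" "\<forall>t\<in>space MT. measure lborel {u \<in> {0..1::real}.
        (\<integral>s. (if p s / \<phi> s \<le> p t / \<phi> t then 1 else 0) * \<phi> s \<partial>MT)
        - u * (\<integral>s. (if p s / \<phi> s = p t / \<phi> t then 1 else 0) * \<phi> s \<partial>MT) \<le> x} = H t"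
        "\<forall>t. 0 \<le> H t \<and> H t \<le> 1" "(\<integral>t. p t * H t \<partial>MT) \<le> x" "(\<integral>t. \<phi> t * H t \<partial>MT) = x"
        using per_y[OF pm \<phi>m pint \<phi>int p0 \<phi>0 p1 \<phi>1 x0 True] by blast
      have Hm[measurable]: "H \<in> borel_measurable MT" by fact
      have "0 \<le> (\<integral>t. p t * H t \<partial>MT)"
        using p0 H(3) by (intro Bochner_Integration.integral_nonneg) simp
      moreover have "(\<integral>t. p t * H t \<partial>MT) = x" if AE: "AE th in MT. post MT prior obs th y = phi th y"
      proof -
        have "(\<integral>t. p t * H t \<partial>MT) = (\<integral>t. \<phi> t * H t \<partial>MT)"
          apply (rule integral_cong_AE)
          apply measurable
          using AE by (auto simp: p_def \<phi>_def)
        then show ?thesis using H(5) by simp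
      qed
      ultimately show ?thesis using q_eq[OF H(2)] H(4) by simp
    next
      case False
      then have x: "x = 1" using x1 by simp
      have r1: "sbc_r MT phi (\<lambda>th y. post MT prior obs th y / phi th y) x t y = 1" for t
      proof -
        let ?f = "\<lambda>th y. post MT prior obs th y / phi th y"
        have "sbc_C MT phi ?f s y \<le> 1" for s
        proof -
          have "sbc_C MT phi ?f s y \<le> (\<integral>th. \<phi> th \<partial>MT)"
            unfolding sbc_C_def \<phi>_def[symmetric]
          proof (rule Bochner_Integration.integral_mono[OF int_ind[OF \<phi>int] \<phi>int])
            show "Measurable.pred MT (\<lambda>th. post MT prior obs th y / \<phi> th \<le> s)" using y by measurable
          qed (use \<phi>0 in \<open>auto intro: less_imp_le\<close>)
          then show ?thesis using \<phi>1 by simp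
        qed
        moreover have "sbc_D MT phi ?f s y \<ge> 0" for s
          unfolding sbc_D_def using pf y unfolding posterior_family_def
          by (intro Bochner_Integration.integral_nonneg) (auto intro: less_imp_le)
        ultimately have "{u \<in> {0..1::real}. sbc_C MT phi ?f (?f t y) y - u * sbc_D MT phi ?f (?f t y) y \<le> x} = {0..1}"
          using x by (auto intro: order_trans[OF _ \<open>sbc_C MT phi ?f (?f t y) y \<le> 1\<close>])
        then show ?thesis unfolding sbc_r_def by simp
      qed
      have "sbc_q MT prior obs phi (\<lambda>th y. post MT prior obs th y / phi th y) x y = 1"
        unfolding sbc_q_def r1 using p1 unfolding p_def by simp
      then show ?thesis using x by simp
    qed
    then show "0 \<le> sbc_q MT prior obs phi (\<lambda>th y. post MT prior obs th y / phi th y) x y"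
    "sbc_q MT prior obs phi (\<lambda>th y. post MT prior obs th y / phi th y) x y \<le> x"
    "(AE th in MT. post MT prior obs th y = phi th y) \<Longrightarrow>
       sbc_q MT prior obs phi (\<lambda>th y. post MT prior obs th y / phi th y) x y = x"
      by auto
  qed
qed


theorem theorem6:
  fixes MT :: "'t measure" and MY :: "'y measure"
    and prior :: "'t \<Rightarrow> real" and obs :: "'y \<Rightarrow> 't \<Rightarrow> real"
    and phi :: "'t \<Rightarrow> 'y \<Rightarrow> real"
  assumes "is_model MT MY prior obs"
    and "posterior_family MT MY phi"
  shows "passes_continuous_SBC MT MY prior obs phi
           (\<lambda>th y. post MT prior obs th y / phi th y)
         \<longleftrightarrow> (\<integral>\<^sup>+y. (\<integral>\<^sup>+th. ennreal (joint prior obs y th *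
                 indicator {th. post MT prior obs th y \<noteq> phi th y} th) \<partial>MT) \<partial>MY) = 0"
proof -
  note model = assms(1) and pf = assms(2)
  interpret MT: sigma_finite_measure MT using model unfolding is_model_def by simp
  interpret MY: sigma_finite_measure MY using model unfolding is_model_def by simp
  interpret P: pair_sigma_finite MY MT ..
  have priorm[measurable]: "prior \<in> borel_measurable MT" using model unfolding is_model_def by simp
  have obsm[measurable]: "case_prod obs \<in> borel_measurable (MY \<Otimes>\<^sub>M MT)" using model unfolding is_model_def by simp
  have phim[measurable]: "case_prod phi \<in> borel_measurable (MT \<Otimes>\<^sub>M MY)" using pf unfolding posterior_family_def by simp
  have margm[measurable]: "marg MT prior obs \<in> borel_measurable MY"
    unfolding marg_def joint_def by measurable
  have postm[measurable]: "case_prod (post MT prior obs) \<in> borel_measurable (MT \<Otimes>\<^sub>M MY)"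
    unfolding post_def joint_def by measurable
  have jm[measurable]: "case_prod (joint prior obs) \<in> borel_measurable (MY \<Otimes>\<^sub>M MT)"
    unfolding joint_def by measurable
  have prior0: "th \<in> space MT \<Longrightarrow> 0 \<le> prior th" for th using model unfolding is_model_def by simp
  have obs0: "y \<in> space MY \<Longrightarrow> th \<in> space MT \<Longrightarrow> 0 \<le> obs y th" for y th
    using model unfolding is_model_def by simp
  have j0: "y \<in> space MY \<Longrightarrow> th \<in> space MT \<Longrightarrow> 0 \<le> joint prior obs y th" for y th
    unfolding joint_def using prior0 obs0 by simp
  have obsint: "th \<in> space MT \<Longrightarrow> integrable MY (\<lambda>y. obs y th) \<and> (\<integral>y. obs y th \<partial>MY) = 1" for th
    using model unfolding is_model_def by simp
  have priorint: "integrable MT prior" and prior1: "(\<integral>th. prior th \<partial>MT) = 1"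
    using model unfolding is_model_def by simp_all
  have nnj: "(\<integral>\<^sup>+z. ennreal (case_prod (joint prior obs) z) \<partial>(MY \<Otimes>\<^sub>M MT)) = 1"
  proof -
    have "(\<integral>\<^sup>+z. ennreal (case_prod (joint prior obs) z) \<partial>(MY \<Otimes>\<^sub>M MT))
        = (\<integral>\<^sup>+th. (\<integral>\<^sup>+y. ennreal (joint prior obs y th) \<partial>MY) \<partial>MT)"
      by (subst P.nn_integral_snd[symmetric]) (auto)
    also have "\<dots> = (\<integral>\<^sup>+th. ennreal (prior th) \<partial>MT)"
    proof (rule nn_integral_cong)
      fix th assume th: "th \<in> space MT"
      have "(\<integral>\<^sup>+y. ennreal (joint prior obs y th) \<partial>MY) = (\<integral>\<^sup>+y. ennreal (obs y th) * ennreal (prior th) \<partial>MY)"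
        unfolding joint_def
        by (rule nn_integral_cong) (use obs0 prior0 th in \<open>simp add: ennreal_mult\<close>)
      also have "\<dots> = (\<integral>\<^sup>+y. ennreal (obs y th) \<partial>MY) * ennreal (prior th)"
        by (rule nn_integral_multc) (use th in measurable)
      also have "(\<integral>\<^sup>+y. ennreal (obs y th) \<partial>MY) = ennreal 1"
        using obsint[OF th] obs0 th by (subst nn_integral_eq_integral) (auto intro!: AE_I2)
      finally show "(\<integral>\<^sup>+y. ennreal (joint prior obs y th) \<partial>MY) = ennreal (prior th)" by simp
    qed
    also have "\<dots> = ennreal 1"
      using priorint prior0 prior1 by (subst nn_integral_eq_integral) (auto intro!: AE_I2)
    finally show ?thesis by simp
  qed
  have jint: "integrable (MY \<Otimes>\<^sub>M MT) (case_prod (joint prior obs))"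
    by (rule integrableI_nonneg) (use nnj j0 in \<open>auto intro!: AE_I2 simp: space_pair_measure\<close>)
  have intAE: "AE y in MY. integrable MT (\<lambda>th. joint prior obs y th)"
    using P.AE_integrable_fst[OF jint] .
  have margint: "integrable MY (marg MT prior obs)"
    using P.integrable_fst[OF jint] unfolding marg_def .
  have marg1: "(\<integral>y. marg MT prior obs y \<partial>MY) = 1"
  proof -
    have "(\<integral>y. marg MT prior obs y \<partial>MY) = integral\<^sup>L (MY \<Otimes>\<^sub>M MT) (case_prod (joint prior obs))"
      using P.integral_fst[OF jint] unfolding marg_def by simp
    also have "\<dots> = enn2real (\<integral>\<^sup>+z. ennreal (case_prod (joint prior obs) z) \<partial>(MY \<Otimes>\<^sub>M MT))"
      by (rule integral_eq_nn_integral) (use j0 in \<open>auto intro!: AE_I2 simp: space_pair_measure\<close>)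
    finally show ?thesis using nnj by simp
  qed
  have marg0: "0 \<le> marg MT prior obs y" if "y \<in> space MY" for y
    unfolding marg_def using j0[OF that] by (intro Bochner_Integration.integral_nonneg) simp
  define Good where "Good y \<longleftrightarrow> integrable MT (\<lambda>th. joint prior obs y th) \<and> 0 < marg MT prior obs y" for y
  define E where "E y \<longleftrightarrow> (AE th in MT. post MT prior obs th y = phi th y)" for y
  have nG: "marg MT prior obs y = 0" if "y \<in> space MY" "\<not> Good y" for y
  proof (cases "integrable MT (\<lambda>th. joint prior obs y th)")
    case True then show ?thesis using that marg0[OF that(1)] unfolding Good_def by simp
  next
    case False then show ?thesis unfolding marg_def by (simp add: not_integrable_integral_eq)
  qed
  let ?f = "\<lambda>th y. post MT prior obs th y / phi th y"
  define Q where "Q x y = sbc_q MT prior obs phi ?f x y * marg MT prior obs y" for x y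
  have Qm[measurable]: "Q x \<in> borel_measurable MY" for x
    unfolding Q_def using meas_all[OF model pf] .
  have Qb: "0 \<le> Q x y \<and> Q x y \<le> x * marg MT prior obs y" if y: "y \<in> space MY" and x: "0 \<le> x" "x \<le> 1" for x y
  proof (cases "Good y")
    case True
    then have ji: "integrable MT (\<lambda>th. joint prior obs y th)" and mp: "0 < marg MT prior obs y"
      unfolding Good_def by auto
    note yl = y_level[OF model pf y ji mp x]
    show ?thesis unfolding Q_def using yl(1,2) mp by (simp add: mult_right_mono)
  next
    case False
    then show ?thesis unfolding Q_def using nG[OF y] by simp
  qed
  have QE: "Q x y = x * marg MT prior obs y" if y: "y \<in> space MY" and x: "0 \<le> x" "x \<le> 1" and GE: "Good y \<longrightarrow> E y" for x y
  proof (cases "Good y")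
    case True
    then have ji: "integrable MT (\<lambda>th. joint prior obs y th)" and mp: "0 < marg MT prior obs y"
      unfolding Good_def by auto
    note yl = y_level[OF model pf y ji mp x]
    show ?thesis unfolding Q_def using yl(3) GE True unfolding E_def by simp
  next
    case False
    then show ?thesis unfolding Q_def using nG[OF y] by simp
  qed
  have QG: "E y" if y: "y \<in> space MY" and G: "Good y" and eq: "Q (1/2) y = (1/2) * marg MT prior obs y" for y
  proof -
    have ji: "integrable MT (\<lambda>th. joint prior obs y th)" and mp: "0 < marg MT prior obs y"
      using G unfolding Good_def by auto
    have "sbc_q MT prior obs phi ?f (1/2) y = 1/2" using eq mp unfolding Q_def by simp
    then show ?thesis unfolding E_def using y_level(4)[OF model pf y ji mp, of "1/2"] by simp
  qed
  have Qint: "integrable MY (Q x)" if x: "0 \<le> x" "x \<le> 1" for x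
  proof (rule Bochner_Integration.integrable_bound[of MY "\<lambda>y. x * marg MT prior obs y"])
    show "integrable MY (\<lambda>y. x * marg MT prior obs y)" using margint by simp
    show "AE y in MY. norm (Q x y) \<le> norm (x * marg MT prior obs y)"
    proof (rule AE_I2)
      fix y assume y: "y \<in> space MY"
      show "norm (Q x y) \<le> norm (x * marg MT prior obs y)"
        using Qb[OF y x] abs_ge_self[of "x * marg MT prior obs y"] by simp
    qed
  qed measurable
  define In where "In y = (\<integral>\<^sup>+th. ennreal (joint prior obs y th *
                 indicator {th. post MT prior obs th y \<noteq> phi th y} th) \<partial>MT)" for y
  have Inm[measurable]: "In \<in> borel_measurable MY" unfolding In_def by measurable
  have pt: "In y = 0 \<longleftrightarrow> (Good y \<longrightarrow> E y)" if y: "y \<in> space MY" and ji: "integrable MT (\<lambda>th. joint prior obs y th)" for y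
  proof -
    have indm: "(\<lambda>th. ennreal (joint prior obs y th * indicator {th. post MT prior obs th y \<noteq> phi th y} th)) \<in> borel_measurable MT"
      using y by measurable
    have "In y = 0 \<longleftrightarrow> (AE th in MT. ennreal (joint prior obs y th * indicator {th. post MT prior obs th y \<noteq> phi th y} th) = 0)"
      unfolding In_def using nn_integral_0_iff_AE[OF indm] .
    also have "\<dots> \<longleftrightarrow> (AE th in MT. joint prior obs y th * indicator {th. post MT prior obs th y \<noteq> phi th y} th = 0)"
    proof (rule AE_cong)
      fix th assume th: "th \<in> space MT"
      have "0 \<le> joint prior obs y th * indicator {th. post MT prior obs th y \<noteq> phi th y} th"
        using j0[OF y th] by simp
      then show "(ennreal (joint prior obs y th * indicator {th. post MT prior obs th y \<noteq> phi th y} th) = 0) =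
        (joint prior obs y th * indicator {th. post MT prior obs th y \<noteq> phi th y} th = 0)"
        by (simp add: ennreal_eq_0_iff)
    qed
    also have "\<dots> \<longleftrightarrow> (Good y \<longrightarrow> E y)"
    proof (cases "Good y")
      case False
      then have m0: "marg MT prior obs y = 0" using nG[OF y] by simp
      have "AE th in MT. joint prior obs y th = 0"
        using integral_nonneg_eq_0_iff_AE[of MT "\<lambda>th. joint prior obs y th"] ji j0[OF y] m0
        unfolding marg_def by (auto intro!: AE_I2)
      then have "AE th in MT. joint prior obs y th * indicator {th. post MT prior obs th y \<noteq> phi th y} th = 0"
        by (rule AE_mp) (auto intro!: AE_I2)
      then show ?thesis using False by simp
    next
      case True
      then have mp: "0 < marg MT prior obs y" unfolding Good_def by simp
      have jp: "joint prior obs y th = marg MT prior obs y * post MT prior obs th y" for th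
        unfolding post_def using mp by simp
      have "(AE th in MT. joint prior obs y th * indicator {th. post MT prior obs th y \<noteq> phi th y} th = 0) \<longleftrightarrow> E y"
      proof
        assume "E y"
        then show "AE th in MT. joint prior obs y th * indicator {th. post MT prior obs th y \<noteq> phi th y} th = 0"
          unfolding E_def by (rule AE_mp) (auto intro!: AE_I2)
      next
        assume A: "AE th in MT. joint prior obs y th * indicator {th. post MT prior obs th y \<noteq> phi th y} th = 0"
        define h where "h th = phi th y - post MT prior obs th y" for th
        have phint: "integrable MT (\<lambda>th. phi th y)" and phi1: "(\<integral>th. phi th y \<partial>MT) = 1"
          using pf y unfolding posterior_family_def by auto
        have phi0: "th \<in> space MT \<Longrightarrow> 0 < phi th y" for th
          using pf y unfolding posterior_family_def by auto
        have postint: "integrable MT (\<lambda>th. post MT prior obs th y)"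
          unfolding post_def using ji by simp
        have post1: "(\<integral>th. post MT prior obs th y \<partial>MT) = 1"
          unfolding post_def using mp by (simp add: marg_def)
        have hint: "integrable MT h" unfolding h_def using phint postint by simp
        have h0: "(\<integral>th. h th \<partial>MT) = 0" unfolding h_def using phint postint phi1 post1 by simp
        have hpos: "AE th in MT. 0 \<le> h th"
        proof (rule AE_mp[OF A AE_I2], intro impI)
          fix th assume th: "th \<in> space MT"
            and z: "joint prior obs y th * indicator {th. post MT prior obs th y \<noteq> phi th y} th = 0"
          show "0 \<le> h th"
          proof (cases "post MT prior obs th y = phi th y")
            case True then show ?thesis unfolding h_def by simp
          next
            case False
            then have "joint prior obs y th = 0" using z by simp
            then have "post MT prior obs th y = 0" using jp[of th] mp by simp
            then show ?thesis unfolding h_def using phi0[OF th] by simp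
          qed
        qed
        have "AE th in MT. h th = 0" using integral_nonneg_eq_0_iff_AE[OF hint hpos] h0 by simp
        then show "E y" unfolding E_def h_def by (rule AE_mp) (auto intro!: AE_I2)
      qed
      then show ?thesis using True by simp
    qed
    finally show ?thesis .
  qed
  have Rchar: "(\<integral>\<^sup>+y. In y \<partial>MY) = 0 \<longleftrightarrow> (AE y in MY. Good y \<longrightarrow> E y)"
  proof -
    have eqAE: "AE y in MY. (In y = 0) = (Good y \<longrightarrow> E y)"
      by (rule AE_mp[OF intAE]) (auto intro!: AE_I2 pt)
    have "(\<integral>\<^sup>+y. In y \<partial>MY) = 0 \<longleftrightarrow> (AE y in MY. In y = 0)"
      using nn_integral_0_iff_AE[OF Inm] .
    also have "\<dots> \<longleftrightarrow> (AE y in MY. Good y \<longrightarrow> E y)"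
    proof
      assume "AE y in MY. In y = 0"
      then show "AE y in MY. Good y \<longrightarrow> E y" using eqAE by eventually_elim simp
    next
      assume "AE y in MY. Good y \<longrightarrow> E y"
      then show "AE y in MY. In y = 0" using eqAE by eventually_elim simp
    qed
    finally show ?thesis .
  qed
  show ?thesis
  proof
    assume pass: "passes_continuous_SBC MT MY prior obs phi ?f"
    have h: "(\<integral>y. Q (1/2) y \<partial>MY) = 1/2"
      using pass unfolding passes_continuous_SBC_def Q_def by auto
    have dint: "integrable MY (\<lambda>y. (1/2) * marg MT prior obs y - Q (1/2) y)"
      using margint Qint[of "1/2"] by simp
    have "(\<integral>y. (1/2) * marg MT prior obs y - Q (1/2) y \<partial>MY) = 0"
      using h marg1 margint Qint[of "1/2"] by simp
    moreover have "AE y in MY. 0 \<le> (1/2) * marg MT prior obs y - Q (1/2) y"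
      using Qb[of _ "1/2"] by (auto intro!: AE_I2)
    ultimately have AE0: "AE y in MY. (1/2) * marg MT prior obs y - Q (1/2) y = 0"
      using integral_nonneg_eq_0_iff_AE[OF dint] by simp
    have "AE y in MY. Good y \<longrightarrow> E y"
      by (rule AE_mp[OF AE0 AE_I2]) (auto intro: QG)
    then show "(\<integral>\<^sup>+y. (\<integral>\<^sup>+th. ennreal (joint prior obs y th *
                 indicator {th. post MT prior obs th y \<noteq> phi th y} th) \<partial>MT) \<partial>MY) = 0"
      using Rchar unfolding In_def by simp
  next
    assume R: "(\<integral>\<^sup>+y. (\<integral>\<^sup>+th. ennreal (joint prior obs y th *
                 indicator {th. post MT prior obs th y \<noteq> phi th y} th) \<partial>MT) \<partial>MY) = 0"
    then have AEGE: "AE y in MY. Good y \<longrightarrow> E y" using Rchar unfolding In_def by simp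
    show "passes_continuous_SBC MT MY prior obs phi ?f"
      unfolding passes_continuous_SBC_def
    proof
      fix x :: real assume x: "x \<in> {0..1}"
      have "(\<integral>y. Q x y \<partial>MY) = (\<integral>y. x * marg MT prior obs y \<partial>MY)"
      proof (rule integral_cong_AE)
        show "AE y in MY. Q x y = x * marg MT prior obs y"
          by (rule AE_mp[OF AEGE AE_I2]) (use x in \<open>auto intro!: QE\<close>)
      qed measurable
      then show "(\<integral>y. sbc_q MT prior obs phi ?f x y * marg MT prior obs y \<partial>MY) = x"
        using marg1 unfolding Q_def by simp
    qed
  qed
qed

end
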